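(* Let $a\ge1$ and $n\ge 2a+1$, and let $\sigma\in S(n;a)$. Then $T_i(\sigma)\in S(n+1;a+1)$ for all $i$.
   Context: For $m\ge a$, $S(m;a)$ denotes the subgroup of $S_m$ generated by all permutations of $\{1,\dots,a\}$ and all permutations of $\{m-a+1,\dots,m\}$. For $\sigma\in S_n$ let $f_\sigma=x_1\cdots x_n-x_{\sigma(1)}\cdots x_{\sigma(n)}$ in the free associative algebra. For $1\le i\le n$ put $T_i(f_\sigma)=f_\sigma(x_1,\dots,x_{i-1},x_ix_{i+1},x_{i+2},\dots,x_{n+1})$; also $T_0(f_\sigma)=x_1f_\sigma(x_2,\dots,x_{n+1})$ and $T_{n+1}(f_\sigma)=f_\sigma(x_1,\dots,x_n)x_{n+1}$. Each $T_i(f_\sigma)$ equals $x_1\cdots x_{n+1}-x_{\tau(1)}\cdots x_{\tau(n+1)}$ for a unique $\tau\in S_{n+1}$, and $T_i(\sigma)$ denotes this $\tau$. *)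

theory Defs
  imports "HOL-Combinatorics.Permutations"
begin

text \<open>Permutations in S_m are functions nat => nat that permute {1..m}
  (and fix everything else).\<close>

inductive_set S_sub :: "nat \<Rightarrow> nat \<Rightarrow> (nat \<Rightarrow> nat) set" for m a :: nat where
  S_id: "id \<in> S_sub m a"
| S_gen_left: "p permutes {1..a} \<Longrightarrow> p \<in> S_sub m a"
| S_gen_right: "p permutes {m - a + 1..m} \<Longrightarrow> p \<in> S_sub m a"
| S_comp: "p \<in> S_sub m a \<Longrightarrow> q \<in> S_sub m a \<Longrightarrow> p \<circ> q \<in> S_sub m a"
| S_inv: "p \<in> S_sub m a \<Longrightarrow> inv p \<in> S_sub m a"

text \<open>A monomial x_{w_1}...x_{w_k} of the free associative algebra is encoded
  by the word w (a list of variable indices).\<close>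
definition subst_var :: "nat \<Rightarrow> nat \<Rightarrow> nat list" where
  "subst_var i j = (if j < i then [j] else if j = i then [i, Suc i] else [Suc j])"

text \<open>Word of the second monomial of f_sigma, i.e. x_{sigma(1)}...x_{sigma(n)}.\<close>
definition perm_word :: "nat \<Rightarrow> (nat \<Rightarrow> nat) \<Rightarrow> nat list" where
  "perm_word n \<sigma> = map \<sigma> [1..<n+1]"

text \<open>Word of the second monomial of T_i(f_sigma), for 0 <= i <= n+1.
  The first monomial x_1...x_n is sent to x_1...x_{n+1} in every case.\<close>
definition T_word :: "nat \<Rightarrow> nat \<Rightarrow> (nat \<Rightarrow> nat) \<Rightarrow> nat list" where
  "T_word n i \<sigma> =
     (if i = 0 then 1 # map Suc (perm_word n \<sigma>)
      else if i = n + 1 then perm_word n \<sigma> @ [n + 1]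
      else concat (map (subst_var i) (perm_word n \<sigma>)))"

text \<open>T_i(sigma): the permutation tau of {1..n+1} with
  x_{tau(1)}...x_{tau(n+1)} the second monomial of T_i(f_sigma).\<close>
definition T_perm :: "nat \<Rightarrow> nat \<Rightarrow> (nat \<Rightarrow> nat) \<Rightarrow> (nat \<Rightarrow> nat)" where
  "T_perm n i \<sigma> = (\<lambda>k. if 1 \<le> k \<and> k \<le> n + 1 then T_word n i \<sigma> ! (k - 1) else k)"

end

theory Submission
  imports Defs
begin

definition Good :: "nat \<Rightarrow> nat \<Rightarrow> (nat \<Rightarrow> nat) \<Rightarrow> bool" where
  "Good m a s \<longleftrightarrow> s permutes {1..m} \<and> (\<forall>k. k \<in> {1..a} \<longleftrightarrow> s k \<in> {1..a})
     \<and> (\<forall>k. a < k \<and> k \<le> m - a \<longrightarrow> s k = k)"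

lemma S_sub_Good:
  assumes "s \<in> S_sub m a" "2 * a < m"
  shows "Good m a s"
  using assms(1)
proof induction
  case S_id
  then show ?case using permutes_id[of "{1..m}"] by (auto simp: Good_def id_def)
next
  case (S_gen_left p)
  have "p permutes {1..m}" using S_gen_left permutes_subset[of p "{1..a}" "{1..m}"] assms(2) by auto
  moreover have "\<forall>k. k \<in> {1..a} \<longleftrightarrow> p k \<in> {1..a}"
    using permutes_in_image[OF S_gen_left] by blast
  moreover have "\<forall>k. a < k \<and> k \<le> m - a \<longrightarrow> p k = k"
    using permutes_not_in[OF S_gen_left] by auto
  ultimately show ?case by (simp add: Good_def)
next
  case (S_gen_right p)
  have "p permutes {1..m}" using S_gen_right permutes_subset[of p "{m-a+1..m}" "{1..m}"] assms(2) by auto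
  moreover have "\<forall>k. k \<in> {1..a} \<longleftrightarrow> p k \<in> {1..a}"
  proof
    fix k
    show "k \<in> {1..a} \<longleftrightarrow> p k \<in> {1..a}"
    proof (cases "k \<in> {m-a+1..m}")
      case True
      then have "p k \<in> {m-a+1..m}" using permutes_in_image[OF S_gen_right] by blast
      then show ?thesis using True assms(2) by auto
    next
      case False
      then show ?thesis using permutes_not_in[OF S_gen_right] by auto
    qed
  qed
  moreover have "\<forall>k. a < k \<and> k \<le> m - a \<longrightarrow> p k = k"
    using permutes_not_in[OF S_gen_right] by auto
  ultimately show ?case by (simp add: Good_def)
next
  case (S_comp p q)
  have "p \<circ> q permutes {1..m}" using S_comp permutes_compose[of q "{1..m}" p] by (simp add: Good_def)
  moreover have "\<forall>k. k \<in> {1..a} \<longleftrightarrow> (p \<circ> q) k \<in> {1..a}"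
    using S_comp(3,4) unfolding Good_def o_def by blast
  moreover have "\<forall>k. a < k \<and> k \<le> m - a \<longrightarrow> (p \<circ> q) k = k"
    using S_comp(3,4) unfolding Good_def o_def by simp
  ultimately show ?case unfolding Good_def by blast
next
  case (S_inv p)
  have pp: "p permutes {1..m}" using S_inv by (simp add: Good_def)
  have "inv p permutes {1..m}" using permutes_inv[OF pp] .
  moreover have "\<forall>k. k \<in> {1..a} \<longleftrightarrow> inv p k \<in> {1..a}"
  proof
    fix k
    have "p (inv p k) = k" using permutes_inverses[OF pp] by simp
    then show "k \<in> {1..a} \<longleftrightarrow> inv p k \<in> {1..a}" using S_inv(2) unfolding Good_def by metis
  qed
  moreover have "\<forall>k. a < k \<and> k \<le> m - a \<longrightarrow> inv p k = k"
    using S_inv(2) permutes_inv_eq[OF pp] unfolding Good_def by auto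
  ultimately show ?case by (simp add: Good_def)
qed

lemma Good_R:
  assumes "Good m a s" "2 * a < m" "m - a < k" "k \<le> m"
  shows "m - a < s k \<and> s k \<le> m"
proof -
  have pp: "s permutes {1..m}" using assms(1) by (simp add: Good_def)
  have "s k \<in> {1..m}" using permutes_in_image[OF pp] assms by auto
  moreover have "s k \<notin> {1..a}" using assms unfolding Good_def by auto
  moreover have "\<not> (a < s k \<and> s k \<le> m - a)"
  proof
    assume h: "a < s k \<and> s k \<le> m - a"
    then have "s (s k) = s k" using assms(1) unfolding Good_def by blast
    then have "s k = k" using permutes_inj[OF pp] by (simp add: inj_eq)
    then show False using h assms by auto
  qed
  ultimately show ?thesis by auto
qed

lemma Good_S_sub:
  assumes pp: "t permutes {1..m}" and L: "\<And>k. k \<in> {1..b} \<Longrightarrow> t k \<in> {1..b}"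
    and M: "\<And>k. b < k \<Longrightarrow> k \<le> m - b \<Longrightarrow> t k = k" and ab: "2 * b \<le> m"
  shows "t \<in> S_sub m b"
proof -
  have inj: "inj t" using permutes_inj[OF pp] .
  have imL: "t ` {1..b} = {1..b}"
  proof -
    have "t ` {1..b} \<subseteq> {1..b}" using L by auto
    moreover have "inj_on t {1..b}" by (metis inj inj_on_subset subset_UNIV)
    ultimately show ?thesis by (simp add: endo_inj_surj)
  qed
  have Liff: "t k \<in> {1..b} \<longleftrightarrow> k \<in> {1..b}" for k
  proof
    assume "t k \<in> {1..b}"
    then obtain k' where "k' \<in> {1..b}" "t k = t k'" using imL by (metis imageE)
    then show "k \<in> {1..b}" using injD[OF inj] by metis
  next
    assume "k \<in> {1..b}"
    then show "t k \<in> {1..b}" by (rule L)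
  qed
  define p where "p = (\<lambda>k. if k \<in> {1..b} then t k else k)"
  define q where "q = (\<lambda>k. if k \<in> {1..b} then k else t k)"
  have "t k = p (q k)" for k
  proof (cases "k \<in> {1..b}")
    case True
    then show ?thesis by (simp add: p_def q_def)
  next
    case False
    then have "t k \<notin> {1..b}" using Liff by blast
    then have "p (t k) = t k" unfolding p_def by (rule if_not_P)
    moreover have "q k = t k" unfolding q_def using False by (rule if_not_P)
    ultimately show ?thesis by simp
  qed
  then have "t = p \<circ> q" by (simp add: fun_eq_iff)
  moreover have "p permutes {1..b}"
  proof (rule bij_imp_permutes)
    show "bij_betw p {1..b} {1..b}"
      unfolding bij_betw_def
    proof
      show "inj_on p {1..b}"
      proof (rule inj_onI)
        fix x y assume "x \<in> {1..b}" "y \<in> {1..b}" "p x = p y"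
        then have "t x = t y" by (simp add: p_def)
        then show "x = y" using injD[OF inj] by metis
      qed
      show "p ` {1..b} = {1..b}" using imL by (auto simp: p_def)
    qed
  qed (auto simp: p_def)
  moreover have "q permutes {m - b + 1..m}"
  proof -
    have out: "q k = k" if "k \<notin> {m - b + 1..m}" for k
    proof (cases "k \<in> {1..b}")
      case False
      show ?thesis
      proof (cases "k \<in> {1..m}")
        case True
        then show ?thesis using False that M by (auto simp: q_def)
      next
        case F2: False
        then show ?thesis using permutes_not_in[OF pp F2] by (auto simp: q_def)
      qed
    qed (simp add: q_def)
    have "bij_betw q {m - b + 1..m} {m - b + 1..m}"
      unfolding bij_betw_def
    proof
      have qt: "q k = t k" if "k \<in> {m - b + 1..m}" for k using that ab by (auto simp: q_def)
      show qi: "inj_on q {m - b + 1..m}"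
      proof (rule inj_onI)
        fix x y assume "x \<in> {m - b + 1..m}" "y \<in> {m - b + 1..m}" "q x = q y"
        then have "t x = t y" using qt by metis
        then show "x = y" using injD[OF inj] by metis
      qed
      have "q ` {m - b + 1..m} \<subseteq> {m - b + 1..m}"
      proof
        fix y assume "y \<in> q ` {m - b + 1..m}"
        then obtain k where k: "k \<in> {m - b + 1..m}" "y = t k" using qt by auto
        have "t k \<in> {1..m}" using permutes_in_image[OF pp] k ab by auto
        moreover have "k \<notin> {1..b}" using k ab by auto
        then have "t k \<notin> {1..b}" using Liff by blast
        moreover have "t k \<notin> {b<..m-b}"
        proof
          assume h: "t k \<in> {b<..m-b}"
          then have "t (t k) = t k" using M by auto
          then have "t k = k" using injD[OF inj] by metis
          then show False using h k by auto
        qed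
        ultimately show "y \<in> {m - b + 1..m}" using k by auto
      qed
      moreover note qi
      ultimately show "q ` {m - b + 1..m} = {m - b + 1..m}" by (simp add: endo_inj_surj)
    qed
    then show ?thesis using out by (rule bij_imp_permutes)
  qed
  ultimately show ?thesis using S_comp[OF S_gen_left S_gen_right] by simp
qed

lemma list_permutes:
  assumes "distinct w" "set w = {1..m}"
  shows "(\<lambda>k. if 1 \<le> k \<and> k \<le> m then w ! (k - 1) else k) permutes {1..m}" (is "?t permutes _")
proof -
  have len: "length w = m" using distinct_card[OF assms(1)] assms(2) by simp
  have im: "?t ` {1..m} \<subseteq> {1..m}"
  proof
    fix y assume "y \<in> ?t ` {1..m}"
    then obtain k where "k \<in> {1..m}" "y = w ! (k - 1)" by auto
    then show "y \<in> {1..m}" using assms(2) len nth_mem[of "k-1" w] by auto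
  qed
  have inj: "inj_on ?t {1..m}"
  proof (rule inj_onI)
    fix x y assume "x \<in> {1..m}" "y \<in> {1..m}" "?t x = ?t y"
    then have "x - 1 = y - 1" using nth_eq_iff_index_eq[OF assms(1), of "x-1" "y-1"] len by auto
    then show "x = y" using \<open>x \<in> {1..m}\<close> \<open>y \<in> {1..m}\<close> by auto
  qed
  have "?t ` {1..m} = {1..m}" using endo_inj_surj[OF _ im inj] by simp
  then show ?thesis
    by (intro bij_imp_permutes) (use inj in \<open>auto simp: bij_betw_def\<close>)
qed


lemma upt_split3: "1 \<le> p \<Longrightarrow> p \<le> n \<Longrightarrow> [1..<n+1] = [1..<p] @ p # [Suc p..<n+1]"
proof -
  assume "1 \<le> p" "p \<le> n"
  then have "[1..<p + (n+1-p)] = [1..<p] @ [p..<p + (n+1-p)]" by (intro upt_add_eq_append)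
  moreover have "[p..<n+1] = p # [Suc p..<n+1]" using \<open>p \<le> n\<close> by (intro upt_conv_Cons) simp
  ultimately show ?thesis using \<open>p \<le> n\<close> by simp
qed

lemma concat_single: "(\<forall>x\<in>set xs. h x = [g x]) \<Longrightarrow> concat (map h xs) = map g xs"
  by (induction xs) auto

lemma distinct_subst: "distinct ws \<Longrightarrow> distinct (concat (map (subst_var i) ws))"
proof (induction ws)
  case Nil
  then show ?case by simp
next
  case (Cons j ws)
  have "set (subst_var i j) \<inter> set (concat (map (subst_var i) ws)) = {}"
    using Cons.prems by (auto simp: subst_var_def split: if_splits)
  moreover have "distinct (subst_var i j)" by (simp add: subst_var_def)
  ultimately show ?case using Cons by simp
qed

lemma set_subst: "1 \<le> i \<Longrightarrow> i \<le> n \<Longrightarrow>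
   (\<Union>j\<in>{1..n}. set (subst_var i j)) = {1..n+1}"
proof
  assume "1 \<le> i" "i \<le> n"
  then show "(\<Union>j\<in>{1..n}. set (subst_var i j)) \<subseteq> {1..n+1}"
    by (auto simp: subst_var_def split: if_splits)
  show "{1..n+1} \<subseteq> (\<Union>j\<in>{1..n}. set (subst_var i j))"
  proof
    fix y assume y: "y \<in> {1..n+1}"
    consider "y < i" | "y = i" | "y = Suc i" | "y > Suc i" by linarith
    then show "y \<in> (\<Union>j\<in>{1..n}. set (subst_var i j))"
    proof cases
      case 1 then show ?thesis using y \<open>i \<le> n\<close> by (intro UN_I[of y]) (auto simp: subst_var_def)
    next
      case 2 then show ?thesis using y \<open>i \<le> n\<close> by (intro UN_I[of i]) (auto simp: subst_var_def)
    next
      case 3 then show ?thesis using \<open>1 \<le> i\<close> \<open>i \<le> n\<close> by (intro UN_I[of i]) (auto simp: subst_var_def)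
    next
      case 4 then show ?thesis using y by (intro UN_I[of "y - 1"]) (auto simp: subst_var_def)
    qed
  qed
qed

theorem lemma2p16:
  fixes a n i :: nat and \<sigma> :: "nat \<Rightarrow> nat"
  assumes "a \<ge> 1"
    and "n \<ge> 2 * a + 1"
    and "\<sigma> \<in> S_sub n a"
    and "i \<le> n + 1"
  shows "T_perm n i \<sigma> \<in> S_sub (n + 1) (a + 1)"
proof -
  have G: "Good n a \<sigma>" using S_sub_Good[OF assms(3)] assms(2) by simp
  have pp: "\<sigma> permutes {1..n}" using G by (simp add: Good_def)
  have GL: "\<And>k. (1 \<le> k \<and> k \<le> a) \<longleftrightarrow> (1 \<le> \<sigma> k \<and> \<sigma> k \<le> a)" using G by (auto simp: Good_def)
  have GM: "\<And>k. a < k \<Longrightarrow> k \<le> n - a \<Longrightarrow> \<sigma> k = k" using G by (auto simp: Good_def)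
  have GR: "\<And>k. n - a < k \<Longrightarrow> k \<le> n \<Longrightarrow> n - a < \<sigma> k \<and> \<sigma> k \<le> n"
    using Good_R[OF G] assms(2) by simp
  have GI: "\<And>k. 1 \<le> k \<Longrightarrow> k \<le> n \<Longrightarrow> 1 \<le> \<sigma> k \<and> \<sigma> k \<le> n"
    using permutes_in_image[OF pp] by auto
  have injs: "inj \<sigma>" using permutes_inj[OF pp] .
  define w where "w = T_word n i \<sigma>"
  define t where "t = T_perm n i \<sigma>"
  have tw: "t = (\<lambda>k. if 1 \<le> k \<and> k \<le> n + 1 then w ! (k - 1) else k)"
    unfolding t_def w_def T_perm_def by (rule refl)
  have pwd: "distinct (perm_word n \<sigma>)"
    using inj_on_subset[OF injs subset_UNIV] by (simp add: perm_word_def distinct_map)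
  have pws: "set (perm_word n \<sigma>) = {1..n}"
  proof -
    have "set [1..<n+1] = {1..n}" by auto
    then show ?thesis using permutes_image[OF pp] by (simp add: perm_word_def)
  qed
  have wd: "distinct w \<and> set w = {1..n+1}"
  proof (cases "i = 0")
    case True
    then show ?thesis using pwd pws by (auto simp: w_def T_word_def distinct_map)
  next
    case F0: False
    show ?thesis
    proof (cases "i = n + 1")
      case True
      then show ?thesis using pwd pws by (auto simp: w_def T_word_def)
    next
      case False
      then have "w = concat (map (subst_var i) (perm_word n \<sigma>))" using F0 by (simp add: w_def T_word_def)
      then show ?thesis using distinct_subst[OF pwd] set_subst[of i n] pws F0 False assms(4) by auto
    qed
  qed
  have tperm: "t permutes {1..n+1}" unfolding tw using list_permutes wd by blast
  have tv: "\<And>k. 1 \<le> k \<Longrightarrow> k \<le> n + 1 \<Longrightarrow> t k = w ! (k - 1)" unfolding tw by simp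
  have h1: "a + 1 \<le> n - a" "a + (n - a) = n" using assms(2) by arith+
  have tLM: "(k \<in> {1..a+1} \<longrightarrow> t k \<in> {1..a+1}) \<and> (a + 1 < k \<and> k \<le> n + 1 - (a + 1) \<longrightarrow> t k = k)" for k
  proof (cases "i = 0")
    case True
    have w0: "w = 1 # map Suc (map \<sigma> [1..<n+1])" using True by (simp add: w_def T_word_def perm_word_def)
    have t1: "t 1 = 1" using tv[of 1] w0 by simp
    have t2: "t k = Suc (\<sigma> (k - 1))" if "2 \<le> k" "k \<le> n + 1" for k
    proof -
      have "w ! (k - 1) = map Suc (map \<sigma> [1..<n+1]) ! (k - 1 - 1)"
        using that by (simp add: w0 nth_Cons' del: upt_Suc)
      also have "\<dots> = Suc (\<sigma> (k - 1))"
      proof -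
        have e: "Suc (k - Suc (Suc 0)) = k - Suc 0" using that by arith
        show ?thesis using that by (simp add: nth_upt e del: upt_Suc)
      qed
      finally have "w ! (k - 1) = Suc (\<sigma> (k - 1))" .
      then show ?thesis using tv that by simp
    qed
    show ?thesis
    proof (cases "k = 1")
      case True then show ?thesis using t1 assms(2) by auto
    next
      case False
      then show ?thesis using t2[of k] GL[of "k-1"] GM[of "k-1"] assms(1,2) h1 by auto
    qed
  next
    case F0: False
    show ?thesis
    proof (cases "i = n + 1")
      case True
      have w0: "w = map \<sigma> [1..<n+1] @ [n+1]" using True by (simp add: w_def T_word_def perm_word_def)
      have t2: "t k = \<sigma> k" if "1 \<le> k" "k \<le> n" for k
      proof -
        have "w ! (k - 1) = \<sigma> k"
        proof -
          have "k - 1 < n" using that by arith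
          then show ?thesis using that by (simp add: w0 nth_append nth_upt del: upt_Suc)
        qed
        then show ?thesis using tv that by simp
      qed
      show ?thesis using t2[of k] GL[of k] GM[of k] assms(1,2) h1 by auto
    next
      case False
      then have i1: "1 \<le> i" "i \<le> n" using F0 assms(4) by auto
      define p where "p = inv \<sigma> i"
      have sp: "\<sigma> p = i" using permutes_inverses[OF pp] p_def by simp
      have p1: "1 \<le> p" "p \<le> n" using i1 sp permutes_not_in[OF pp, of p] by (cases "p \<in> {1..n}"; auto)+
      define f where "f = (\<lambda>j::nat. if j < i then j else Suc j)"
      have sv: "subst_var i j = [f j]" if "j \<noteq> i" for j using that by (auto simp: subst_var_def f_def)
      have neq: "\<sigma> x \<noteq> i" if "x \<noteq> p" for x using injD[OF injs] sp that by metis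
      have "w = concat (map (subst_var i) (map \<sigma> [1..<n+1]))"
        using F0 False by (simp add: w_def T_word_def perm_word_def)
      also have "\<dots> = concat (map (subst_var i) (map \<sigma> [1..<p])) @ [i, Suc i] @
            concat (map (subst_var i) (map \<sigma> [Suc p..<n+1]))"
        using upt_split3[OF p1] sp by (simp add: subst_var_def)
      also have "concat (map (subst_var i) (map \<sigma> [1..<p])) = map (f \<circ> \<sigma>) [1..<p]"
        unfolding map_map by (rule concat_single) (use neq sv in \<open>auto simp del: upt_Suc\<close>)
      also have "concat (map (subst_var i) (map \<sigma> [Suc p..<n+1])) = map (f \<circ> \<sigma>) [Suc p..<n+1]"
        unfolding map_map by (rule concat_single) (use neq sv in \<open>auto simp del: upt_Suc\<close>)
      finally have w0: "w = map (f \<circ> \<sigma>) [1..<p] @ [i, Suc i] @ map (f \<circ> \<sigma>) [Suc p..<n+1]" .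
      have e2: "\<And>k::nat. 2 \<le> k \<Longrightarrow> Suc (k - 2) = k - Suc 0" by arith
      have tf: "t k = (if k < p then f (\<sigma> k) else if k = p then i else if k = Suc p then Suc i
                  else f (\<sigma> (k - 1)))" if "1 \<le> k" "k \<le> n + 1" for k
      proof -
        have "w ! (k - 1) = (if k < p then f (\<sigma> k) else if k = p then i else if k = Suc p then Suc i
                  else f (\<sigma> (k - 1)))"
          using that p1 by (auto simp: w0 nth_append nth_Cons' nth_upt e2 simp del: upt_Suc)
        then show ?thesis using tv that by simp
      qed
      have ipL: "1 \<le> i \<and> i \<le> a" if "p \<le> a" using GL[of p] that p1 sp by auto
      have ipM: "i = p" if "a < p" "p \<le> n - a" using GM[of p] that sp by auto
      have ipR: "n - a < i" if "n - a < p" using GR[of p] that p1 sp by auto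
      show ?thesis
      proof (intro conjI impI)
        assume kL: "k \<in> {1..a+1}"
        then have k1: "1 \<le> k" "k \<le> n+1" using h1 by auto
        consider "k < p" | "k = p" | "k = Suc p" | "k > Suc p" by linarith
        then show "t k \<in> {1..a+1}"
        proof cases
          case 1
          then have tk: "t k = f (\<sigma> k)" using tf[OF k1] by simp
          show ?thesis
          proof (cases "k \<le> a")
            case True
            then have "1 \<le> \<sigma> k \<and> \<sigma> k \<le> a" using GL[of k] kL by auto
            then show ?thesis unfolding tk f_def by auto
          next
            case False
            then have ka: "k = a+1" using kL by auto
            then have sk: "\<sigma> k = a+1" using GM[of k] h1 by auto
            have "a + 1 < p" using 1 ka by simp
            then have "a + 1 < i" using ipM ipR h1 by (cases "p \<le> n - a") auto
            then show ?thesis unfolding tk f_def using sk by auto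
          qed
        next
          case 2
          then have tk: "t k = i" using tf[OF k1] by simp
          show ?thesis
          proof (cases "p \<le> a")
            case True then show ?thesis using ipL tk by auto
          next
            case False then show ?thesis using ipM[of] 2 kL tk h1 by auto
          qed
        next
          case 3
          then have tk: "t k = Suc i" using tf[OF k1] by simp
          have "p \<le> a" using 3 kL by auto
          then show ?thesis using ipL tk by auto
        next
          case 4
          then have tk: "t k = f (\<sigma> (k - 1))" using tf[OF k1] by simp
          have "1 \<le> k - 1 \<and> k - 1 \<le> a" using 4 kL p1 by auto
          then have "1 \<le> \<sigma> (k - 1) \<and> \<sigma> (k - 1) \<le> a" using GL[of "k - 1"] by blast
          then show ?thesis unfolding tk f_def by auto
        qed
      next
        assume kM: "a + 1 < k \<and> k \<le> n + 1 - (a + 1)"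
        then have k1: "1 \<le> k" "k \<le> n+1" by auto
        have kM': "a < k" "k \<le> n - a" using kM by auto
        consider "k < p" | "k = p" | "k = Suc p" | "k > Suc p" by linarith
        then show "t k = k"
        proof cases
          case 1
          then have tk: "t k = f (\<sigma> k)" using tf[OF k1] by simp
          have sk: "\<sigma> k = k" using GM kM' by blast
          have "k < i" using ipM ipR 1 kM' by (cases "p \<le> n - a") auto
          then show ?thesis unfolding tk f_def sk by auto
        next
          case 2
          then have tk: "t k = i" using tf[OF k1] by simp
          then show ?thesis using ipM 2 kM' by auto
        next
          case 3
          then have tk: "t k = Suc i" using tf[OF k1] by simp
          have "a < p" "p \<le> n - a" using 3 kM' kM by auto
          then show ?thesis using ipM tk 3 by auto
        next
          case 4
          then have tk: "t k = f (\<sigma> (k - 1))" using tf[OF k1] by simp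
          have sk: "\<sigma> (k - 1) = k - 1" using GM[of "k - 1"] kM 4 by auto
          have "i < k - 1"
          proof (cases "p \<le> a")
            case True then show ?thesis using ipL kM by auto
          next
            case False then show ?thesis using ipM[of] 4 kM' by auto
          qed
          then show ?thesis unfolding tk f_def sk using 4 by auto
        qed
      qed
    qed
  qed
  have tL: "t k \<in> {1..a+1}" if "k \<in> {1..a+1}" for k using tLM that by blast
  have tM: "t k = k" if "a + 1 < k" "k \<le> n + 1 - (a + 1)" for k using tLM that by blast
  show ?thesis unfolding t_def[symmetric]
    by (rule Good_S_sub[OF tperm tL tM]) (use assms(2) in auto)
qed

end
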